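(* Let $\mathcal{S}$ be a state space equipped with a norm $\|\cdot\|$, let $\mathcal{A}$ be a bounded action set, let $f:\mathcal{S}\times\mathcal{A}\to\mathcal{S}$ be discrete-time dynamics $s_{t+1}=f(s_t,a_t)$, let $\ell:\mathcal{S}\to\mathbb{R}$ be a margin function, and let $\gamma\in[0,1)$ be a discount factor. Let $V:\mathcal{S}\to\mathbb{R}$ be the time-discounted Hamilton–Jacobi value function, i.e. $V$ satisfies, for all $s\in\mathcal{S}$, \[ V(s) = (1-\gamma)\,\ell(s) + \gamma \min\Big\{ \ell(s),\ \max_{a\in\mathcal{A}} V(f(s,a)) \Big\}. \] Suppose $\ell$ and $V$ are Lipschitz continuous with Lipschitz constants $L_\ell$ and $L_V$ respectively, and suppose $f(s,a)$ is uniformly Lipschitz in $s$ (uniformly over $a\in\mathcal{A}$) with constant $L_f$, where $\gamma L_f<1$. Then \[ L_V \le L_\ell \cdot \max\left\{1,\ \frac{1-\gamma}{1-\gamma L_f}\right\}. \]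
   Context: A function $g:\mathcal{S}\to\mathbb{R}$ is Lipschitz continuous if there is $L\ge 0$ with $|g(s)-g(\tilde s)|\le L\|s-\tilde s\|$ for all $s,\tilde s\in\mathcal{S}$; the smallest such $L$ is the Lipschitz constant of $g$. The margin function $\ell$ implicitly encodes the failure set $\{s : \ell(s)<0\}$. The maxima over $\mathcal{A}$ in the fixed-point equation are assumed to be attained. *)

theory Defs
  imports "HOL-Analysis.Analysis"
begin

text \<open>The Lipschitz constant of a function on the whole space: the smallest L \<ge> 0
  with L-lipschitz_on UNIV g (the infimum is attained, since the set is closed).\<close>
definition lipschitz_constant :: "('a::metric_space \<Rightarrow> 'b::metric_space) \<Rightarrow> real" where
  "lipschitz_constant g = Inf {L. L-lipschitz_on UNIV g}"

end

theory Submission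
  imports Defs
begin

lemma lc_lip:
  fixes g :: "'a::metric_space \<Rightarrow> 'b::metric_space"
  assumes "\<exists>L. L-lipschitz_on UNIV g"
  shows "(lipschitz_constant g)-lipschitz_on UNIV g"
proof -
  let ?S = "{L. L-lipschitz_on UNIV g}"
  have ne: "?S \<noteq> {}" using assms by auto
  have bdd: "bdd_below ?S" by (auto intro!: bdd_belowI[of _ 0] lipschitz_on_nonneg)
  have nn: "0 \<le> lipschitz_constant g"
    unfolding lipschitz_constant_def using ne
    by (auto intro!: cInf_greatest dest: lipschitz_on_nonneg)
  show ?thesis
  proof (rule lipschitz_onI)
    fix x y :: 'a
    show "dist (g x) (g y) \<le> lipschitz_constant g * dist x y"
    proof (cases "dist x y = 0")
      case True then show ?thesis by simp
    next
      case False
      then have dp: "dist x y > 0" by simp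
      have "dist (g x) (g y) / dist x y \<le> lipschitz_constant g"
        unfolding lipschitz_constant_def
      proof (rule cInf_greatest[OF ne])
        fix L assume "L \<in> ?S"
        then have "dist (g x) (g y) \<le> L * dist x y" by (auto dest: lipschitz_onD)
        then show "dist (g x) (g y) / dist x y \<le> L" using dp by (simp add: divide_le_eq)
      qed
      then show ?thesis using dp by (simp add: divide_le_eq)
    qed
  qed (rule nn)
qed

lemma minlip: "\<bar>min (a::real) b - min c d\<bar> \<le> max \<bar>a - c\<bar> \<bar>b - d\<bar>"
  by (simp add: min_def max_def abs_if)

lemma lc_le:
  fixes g :: "'a::metric_space \<Rightarrow> 'b::metric_space"
  assumes "M-lipschitz_on UNIV g"
  shows "lipschitz_constant g \<le> M"
  unfolding lipschitz_constant_def
  using assms by (auto intro!: cInf_lower bdd_belowI[of _ 0] lipschitz_on_nonneg)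

theorem theorem1:
  fixes f :: "'s::real_normed_vector \<Rightarrow> 'act::metric_space \<Rightarrow> 's"
    and AA :: "'act set"
    and l V :: "'s \<Rightarrow> real"
    and \<gamma> L_f :: real
  assumes A_bounded: "bounded AA"
    and gamma: "0 \<le> \<gamma>" "\<gamma> < 1"
    and max_attained: "\<And>s. \<exists>a\<in>AA. \<forall>a'\<in>AA. V (f s a') \<le> V (f s a)"
    and fixpoint: "\<And>s. V s = (1 - \<gamma>) * l s + \<gamma> * min (l s) (SUP a\<in>AA. V (f s a))"
    and l_lip: "\<exists>L. L-lipschitz_on UNIV l"
    and V_lip: "\<exists>L. L-lipschitz_on UNIV V"
    and f_lip: "\<And>a. a \<in> AA \<Longrightarrow> L_f-lipschitz_on UNIV (\<lambda>s. f s a)"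
    and gLf: "\<gamma> * L_f < 1"
  shows "lipschitz_constant V
           \<le> lipschitz_constant l * max 1 ((1 - \<gamma>) / (1 - \<gamma> * L_f))"
proof -
  define Ll where "Ll = lipschitz_constant l"
  define LV where "LV = lipschitz_constant V"
  have ll: "Ll-lipschitz_on UNIV l" unfolding Ll_def by (rule lc_lip[OF l_lip])
  have lv: "LV-lipschitz_on UNIV V" unfolding LV_def by (rule lc_lip[OF V_lip])
  have Ll0: "Ll \<ge> 0" using ll lipschitz_on_nonneg by blast
  have LV0: "LV \<ge> 0" using lv lipschitz_on_nonneg by blast
  obtain a0 where "a0 \<in> AA" using max_attained by blast
  then have Lf0: "L_f \<ge> 0" using f_lip lipschitz_on_nonneg by blast
  define m where "m s = (SUP a\<in>AA. V (f s a))" for s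
  have mprop: "\<exists>a\<in>AA. m s = V (f s a) \<and> (\<forall>a'\<in>AA. V (f s a') \<le> m s)" for s
  proof -
    obtain a where a: "a \<in> AA" "\<forall>a'\<in>AA. V (f s a') \<le> V (f s a)" using max_attained by blast
    have "m s = V (f s a)" unfolding m_def
      by (rule cSup_eq_maximum) (use a in auto)
    then show ?thesis using a by auto
  qed
  have mle: "m s \<le> m s' + LV * L_f * dist s s'" for s s'
  proof -
    obtain a where a: "a \<in> AA" "m s = V (f s a)" using mprop by blast
    have "V (f s a) - V (f s' a) \<le> dist (V (f s a)) (V (f s' a))" by (simp add: dist_real_def)
    also have "\<dots> \<le> LV * dist (f s a) (f s' a)" using lv by (auto dest: lipschitz_onD)
    also have "\<dots> \<le> LV * (L_f * dist s s')"
      using f_lip[OF a(1)] LV0 by (auto dest: lipschitz_onD intro!: mult_left_mono)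
    finally have "V (f s a) \<le> V (f s' a) + LV * L_f * dist s s'" by (simp add: algebra_simps)
    moreover have "V (f s' a) \<le> m s'" using mprop a(1) by metis
    ultimately show ?thesis using a by linarith
  qed
  define M where "M = (1 - \<gamma>) * Ll + \<gamma> * max Ll (LV * L_f)"
  have "M-lipschitz_on UNIV V"
  proof (rule lipschitz_onI)
    fix x y :: 's
    let ?d = "dist x y"
    have dl: "\<bar>l x - l y\<bar> \<le> Ll * ?d" using ll by (auto dest: lipschitz_onD simp: dist_real_def)
    have dm: "\<bar>m x - m y\<bar> \<le> LV * L_f * ?d" using mle[of x y] mle[of y x] by (simp add: dist_commute)
    have "Ll * ?d \<le> max Ll (LV * L_f) * ?d" "LV * L_f * ?d \<le> max Ll (LV * L_f) * ?d"
      by (auto intro!: mult_right_mono)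
    then have dmin: "\<bar>min (l x) (m x) - min (l y) (m y)\<bar> \<le> max Ll (LV * L_f) * ?d"
      using dl dm minlip[of "l x" "m x" "l y" "m y"] by linarith
    have "V x - V y = (1 - \<gamma>) * (l x - l y) + \<gamma> * (min (l x) (m x) - min (l y) (m y))"
      using fixpoint[of x] fixpoint[of y] unfolding m_def by (simp add: algebra_simps)
    then have "\<bar>V x - V y\<bar> \<le> (1 - \<gamma>) * \<bar>l x - l y\<bar> + \<gamma> * \<bar>min (l x) (m x) - min (l y) (m y)\<bar>"
      using gamma by (simp add: abs_triangle_ineq[THEN order_trans] abs_mult)
    also have "\<dots> \<le> (1 - \<gamma>) * (Ll * ?d) + \<gamma> * (max Ll (LV * L_f) * ?d)"
      using gamma dl dmin by (intro add_mono mult_left_mono) auto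
    finally show "dist (V x) (V y) \<le> M * ?d" unfolding M_def by (simp add: dist_real_def algebra_simps)
  next
    show "0 \<le> M" unfolding M_def using gamma Ll0 by (auto intro!: add_nonneg_nonneg mult_nonneg_nonneg)
  qed
  then have key: "LV \<le> M" unfolding LV_def by (rule lc_le)
  have pos: "1 - \<gamma> * L_f > 0" using gLf by simp
  show ?thesis
  proof (cases "LV * L_f \<le> Ll")
    case True
    then have "LV \<le> Ll" using key unfolding M_def by (simp add: max_def algebra_simps)
    then show ?thesis using Ll0 unfolding LV_def Ll_def[symmetric]
    proof -
      have "Ll * 1 \<le> Ll * max 1 ((1 - \<gamma>) / (1 - \<gamma> * L_f))"
        using Ll0 by (intro mult_left_mono) auto
      then show "lipschitz_constant V \<le> Ll * max 1 ((1 - \<gamma>) / (1 - \<gamma> * L_f))"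
        using \<open>LV \<le> Ll\<close> unfolding LV_def by simp
    qed
  next
    case False
    then have "LV \<le> (1 - \<gamma>) * Ll + \<gamma> * (LV * L_f)" using key unfolding M_def by simp
    then have "LV * (1 - \<gamma> * L_f) \<le> (1 - \<gamma>) * Ll" by (simp add: algebra_simps)
    then have "LV \<le> Ll * ((1 - \<gamma>) / (1 - \<gamma> * L_f))" using pos by (simp add: field_simps)
    also have "\<dots> \<le> Ll * max 1 ((1 - \<gamma>) / (1 - \<gamma> * L_f))"
      using Ll0 by (intro mult_left_mono) auto
    finally show ?thesis unfolding LV_def Ll_def .
  qed
qed

end
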